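(* For every integer $n\ge0$, the number of walks $0=y_0,y_1,\dots,y_n=2$ with $y_i-y_{i-1}\in\{-2,-1,+1,+2\}$ for all $i$ and $y_i\ge1$ for all $1\le i\le n$ (basketball walks of length $n$ from the origin to altitude $2$ never returning to the $x$-axis) equals $$\frac{1}{2n+1}\sum_{k=0}^{n+1}(-1)^{n+k+1}\binom{2n+1}{n+k}\binom{n+2k-1}{k}.$$
   Context: For integers $a$ and $b$, $\binom ab=a(a-1)\cdots(a-b+1)/b!$ if $b\ge0$ (so $\binom{-1}{0}=1$) and $\binom ab=0$ if $b<0$. *)

theory Defs
  imports Complex_Main
begin

definition basketball_excursion_walks :: "nat \<Rightarrow> int list set" where
  "basketball_excursion_walks n =
     {ys. length ys = n + 1 \<and> ys ! 0 = 0 \<and> ys ! n = 2 \<and>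
          (\<forall>i\<in>{1..n}. ys ! i - ys ! (i - 1) \<in> {-2, -1, 1, 2}) \<and>
          (\<forall>i\<in>{1..n}. ys ! i \<ge> 1)}"

end

theory Submission
  imports Defs "HOL-Computational_Algebra.Formal_Power_Series"
begin

unbundle fps_syntax


fun bb :: "nat \<Rightarrow> int \<Rightarrow> nat" where
  "bb 0 h = (if h = 0 then 1 else 0)"
| "bb (Suc n) h = (if h \<ge> 1 then bb n (h-2) + bb n (h-1) + bb n (h+1) + bb n (h+2) else 0)"

definition SW :: "nat \<Rightarrow> int \<Rightarrow> int list set" where
  "SW n h = {ys. length ys = n + 1 \<and> ys ! 0 = 0 \<and> ys ! n = h \<and>
          (\<forall>i\<in>{1..n}. ys ! i - ys ! (i - 1) \<in> {-2, -1, 1, 2}) \<and>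
          (\<forall>i\<in>{1..n}. ys ! i \<ge> 1)}"

lemma SW0: "SW 0 h = (if h = 0 then {[0]} else {})"
proof -
  have "ys \<in> SW 0 h \<longleftrightarrow> h = 0 \<and> ys = [0]" for ys
    unfolding SW_def by (cases ys) auto
  then show ?thesis by auto
qed

lemma SW_neg: "h < 1 \<Longrightarrow> SW (Suc n) h = {}"
  unfolding SW_def by force

lemma SW_Suc:
  assumes "h \<ge> 1"
  shows "SW (Suc n) h = (\<lambda>zs. zs @ [h]) ` (SW n (h-2) \<union> SW n (h-1) \<union> SW n (h+1) \<union> SW n (h+2))"
proof (rule set_eqI, rule iffI)
  fix ys assume ys: "ys \<in> SW (Suc n) h"
  let ?zs = "butlast ys"
  have len: "length ys = n + 2" using ys unfolding SW_def by simp
  have eq: "ys = ?zs @ [h]"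
  proof -
    have "ys \<noteq> []" using len by auto
    moreover have "last ys = ys ! (length ys - 1)" using len by (intro last_conv_nth) auto
    moreover have "ys ! Suc n = h" using ys unfolding SW_def by simp
    ultimately have "last ys = h" using len by simp
    moreover have "ys \<noteq> []" using len by auto
    ultimately show ?thesis by (metis append_butlast_last_id)
  qed
  have nth: "\<And>i. i \<le> n \<Longrightarrow> ?zs ! i = ys ! i" using len by (simp add: nth_butlast)
  have st: "ys ! (Suc n) - ys ! n \<in> {-2,-1,1,2}" using ys unfolding SW_def by force
  have hy: "ys ! Suc n = h" using ys unfolding SW_def by simp
  have zin: "?zs \<in> SW n (ys ! n)"
    unfolding SW_def
  proof (intro CollectI conjI ballI)
    show "length ?zs = n+1" using len by simp
    show "?zs!0 = 0" using nth[of 0] ys unfolding SW_def by simp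
    show "?zs ! n = ys ! n" using nth by simp
  next
    fix i assume i: "i \<in> {1..n}"
    then have i2: "i \<in> {1..Suc n}" by auto
    have "ys!i - ys!(i-1) \<in> {-2,-1,1,2}" using ys i2 unfolding SW_def by blast
    moreover have "?zs!(i-1) = ys!(i-1)" using nth i by auto
    moreover have "?zs!i = ys!i" using nth i by auto
    ultimately show "?zs!i - ?zs!(i-1) \<in> {-2,-1,1,2}" by simp
  next
    fix i assume i: "i \<in> {1..n}"
    then have i2: "i \<in> {1..Suc n}" by auto
    have "ys!i \<ge> 1" using ys i2 unfolding SW_def by blast
    then show "?zs!i \<ge> 1" using nth[of i] i by simp
  qed
  from st hy have "ys ! n \<in> {h-2, h-1, h+1, h+2}" by auto
  with zin eq show "ys \<in> (\<lambda>zs. zs @ [h]) ` (SW n (h-2) \<union> SW n (h-1) \<union> SW n (h+1) \<union> SW n (h+2))"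
    by auto
next
  fix ys assume "ys \<in> (\<lambda>zs. zs @ [h]) ` (SW n (h-2) \<union> SW n (h-1) \<union> SW n (h+1) \<union> SW n (h+2))"
  then obtain zs where ys: "ys = zs @ [h]" and zU: "zs \<in> SW n (h-2) \<union> SW n (h-1) \<union> SW n (h+1) \<union> SW n (h+2)"
    by blast
  from zU have "\<exists>d. d \<in> {-2,-1,1,2::int} \<and> zs \<in> SW n (h - d)"
  proof (elim UnE)
    assume "zs \<in> SW n (h-2)" then show ?thesis by (intro exI[of _ 2]) simp
  next
    assume "zs \<in> SW n (h-1)" then show ?thesis by (intro exI[of _ 1]) simp
  next
    assume "zs \<in> SW n (h+1)" then show ?thesis by (intro exI[of _ "-1"]) simp
  next
    assume "zs \<in> SW n (h+2)" then show ?thesis by (intro exI[of _ "-2"]) simp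
  qed
  then obtain d where d: "d \<in> {-2,-1,1,2}" and zs: "zs \<in> SW n (h - d)" by blast
  have len: "length zs = n + 1" using zs unfolding SW_def by simp
  have nth: "\<And>i. i \<le> n \<Longrightarrow> ys ! i = zs ! i" using len ys by (simp add: nth_append)
  have last: "ys ! Suc n = h" using ys len by (simp add: nth_append)
  show "ys \<in> SW (Suc n) h"
    unfolding SW_def
  proof (intro CollectI conjI ballI)
    show "length ys = Suc n + 1" using ys len by simp
    show "ys ! 0 = 0" using nth[of 0] zs unfolding SW_def by simp
    show "ys ! Suc n = h" by (rule last)
  next
    fix i assume i: "i \<in> {1..Suc n}"
    show "ys ! i - ys ! (i - 1) \<in> {-2, -1, 1, 2}"
    proof (cases "i = Suc n")
      case True
      then show ?thesis using last nth[of n] zs d unfolding SW_def by auto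
    next
      case False
      then have "i \<in> {1..n}" using i by auto
      then have "zs!i - zs!(i-1) \<in> {-2,-1,1,2}" using zs unfolding SW_def by blast
      moreover have "ys!(i-1) = zs!(i-1)" using nth \<open>i \<in> {1..n}\<close> by auto
      moreover have "ys!i = zs!i" using nth \<open>i \<in> {1..n}\<close> by auto
      ultimately show ?thesis by simp
    qed
  next
    fix i assume i: "i \<in> {1..Suc n}"
    show "ys ! i \<ge> 1"
    proof (cases "i = Suc n")
      case True
      then show ?thesis using last assms by auto
    next
      case False
      then have "i \<in> {1..n}" using i by auto
      then show ?thesis using nth[of i] zs unfolding SW_def by auto
    qed
  qed
qed

lemma SW_disj: "a \<noteq> b \<Longrightarrow> SW n a \<inter> SW n b = {}"
  unfolding SW_def by auto

lemma SW_card: "finite (SW n h) \<and> card (SW n h) = bb n h"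
proof (induction n arbitrary: h)
  case 0
  then show ?case by (simp add: SW0)
next
  case (Suc n)
  show ?case
  proof (cases "h \<ge> 1")
    case False
    then show ?thesis by (simp add: SW_neg)
  next
    case True
    have inj: "inj (\<lambda>zs. zs @ [h])" by (auto intro: injI)
    let ?U = "SW n (h-2) \<union> SW n (h-1) \<union> SW n (h+1) \<union> SW n (h+2)"
    have fin: "finite ?U" using Suc by simp
    have "card ?U = bb n (h-2) + bb n (h-1) + bb n (h+1) + bb n (h+2)"
      using Suc SW_disj
      by (simp add: card_Un_disjoint Int_Un_distrib2)
    then show ?thesis using True fin inj SW_Suc[OF True, of n]
      by (simp add: card_image inj_on_def)
  qed
qed

lemma card_walks: "card (basketball_excursion_walks n) = bb n 2"
proof -
  have "basketball_excursion_walks n = SW n 2" unfolding basketball_excursion_walks_def SW_def by simp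
  then show ?thesis using SW_card by simp
qed




definition psi :: "real fps" where "psi = inverse (1 - fps_X) - fps_X"
definition GG :: "real fps" where "GG = fps_X * inverse (psi^2)"
definition EE :: "real fps" where "EE = fps_inv GG"

lemma psi0: "psi $ 0 = 1" unfolding psi_def by simp
lemma GG0: "GG $ 0 = 0" unfolding GG_def by simp
lemma psi20: "(psi^2) $ 0 = 1" using psi0 by (simp add: power2_eq_square)
lemma GG1: "GG $ 1 = 1" unfolding GG_def using psi20 by (simp add: fps_X_mult_nth)
lemma EE0: "EE $ 0 = 0" unfolding EE_def fps_inv_def by simp
lemma GE: "GG oo EE = fps_X" unfolding EE_def using GG0 GG1 by (intro fps_inv_right) auto
lemma EG: "EE oo GG = fps_X" unfolding EE_def using GG0 GG1 by (intro fps_inv) auto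

definition II :: "real fps" where "II = inverse (1 - EE)"
definition PS :: "real fps" where "PS = II - EE"

lemma II_rel: "II * (1 - EE) = 1" unfolding II_def using EE0 by (simp add: inverse_mult_eq_1)
lemma PS_comp: "psi oo EE = PS"
  unfolding psi_def PS_def II_def using EE0
  by (simp add: fps_compose_sub_distrib fps_inverse_compose)
lemma PS0: "PS $ 0 = 1" unfolding PS_def II_def using EE0 by simp
lemma X_rel: "fps_X * PS^2 = EE"
proof -
  have "fps_X = GG oo EE" using GE by simp
  also have "\<dots> = EE * inverse (PS^2)"
  proof -
    have "psi^2 oo EE = PS^2" using fps_compose_power[OF EE0, of psi 2] PS_comp by simp
    then show ?thesis
      unfolding GG_def using EE0 psi20
      by (simp add: fps_compose_mult_distrib fps_inverse_compose)
  qed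
  finally have "fps_X * PS^2 = EE * inverse (PS^2) * PS^2" by simp
  also have "\<dots> = EE" using PS0 by (simp add: inverse_mult_eq_1)
  finally show ?thesis .
qed

definition e1 :: "real fps" where "e1 = EE * II"

fun ww :: "nat \<Rightarrow> real fps" where
  "ww 0 = 0"
| "ww (Suc 0) = 1"
| "ww (Suc (Suc k)) = e1 * ww (Suc k) + EE * ww k"

lemma alg0: "(e1 - fps_X * (1 + (e1*e1 + EE) + (e1*(e1*e1+EE) + EE*e1))) * PS^2 = 0"
proof -
  have a: "II * (1 - EE) = 1" by (rule II_rel)
  have b: "fps_X * PS^2 = EE" by (rule X_rel)
  show ?thesis using a b unfolding e1_def PS_def by algebra
qed

lemma PS2_nz: "PS^2 \<noteq> 0" using PS0 by (metis one_neq_zero power_not_zero fps_nonzero_nth)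

definition DD :: "nat \<Rightarrow> real fps" where
  "DD k = ww (k+2) - fps_X * (ww k + ww (k+1) + ww (k+3) + ww (k+4))"

lemma DD0: "DD 0 = 0"
proof -
  have "DD 0 * PS^2 = 0"
    unfolding DD_def using alg0 by (simp add: numeral_eq_Suc)
  then show ?thesis using PS2_nz by simp
qed

lemma DD1: "DD 1 = 0"
proof -
  have a: "II * (1 - EE) = 1" by (rule II_rel)
  have b: "fps_X * PS^2 = EE" by (rule X_rel)
  have "DD 1 * PS^2 = 0"
    unfolding DD_def using a b by (simp add: numeral_eq_Suc e1_def PS_def) algebra
  then show ?thesis using PS2_nz by simp
qed

lemma DD_rec: "DD (k+2) = e1 * DD (k+1) + EE * DD k"
  unfolding DD_def by (simp add: numeral_eq_Suc algebra_simps)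

lemma DD_zero: "DD k = 0"
proof -
  have "DD k = 0 \<and> DD (Suc k) = 0"
  proof (induction k)
    case 0 then show ?case using DD0 DD1 by simp
  next
    case (Suc k) then show ?case using DD_rec[of k] by simp
  qed
  then show ?thesis by simp
qed

lemma ww_rec: "ww (k+2) = fps_X * (ww k + ww (k+1) + ww (k+3) + ww (k+4))"
  using DD_zero[of k] unfolding DD_def by simp




lemma lag_coef:
  fixes phi :: "real fps"
  assumes p0: "phi $ 0 \<noteq> 0" and jk: "j \<le> k"
  shows "((fps_X * inverse phi)^j * fps_deriv (fps_X * inverse phi) * phi^(Suc k)) $ k
         = (if j = k then 1 else 0)"
proof -
  define ip where "ip = inverse phi"
  define r where "r = k - j"
  have ipp: "ip * phi = 1" unfolding ip_def using p0 by (simp add: inverse_mult_eq_1)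
  have ipow: "ip^j * phi^j = 1" by (metis ipp power_mult_distrib power_one)
  have pk: "phi^(Suc k) = phi^j * phi^(Suc r)" using jk unfolding r_def
    by (metis Suc_diff_le add_Suc_right le_add_diff_inverse power_add)
  define G' where "G' = fps_deriv (fps_X * ip)"
  have G'eq: "G' = ip - fps_X * (fps_deriv phi * ip^2)"
    unfolding G'_def ip_def using p0 by (simp add: fps_inverse_deriv algebra_simps)
  have "(fps_X * ip)^j * G' * phi^(Suc k) = fps_X^j * (G' * phi^(Suc r)) * (ip^j * phi^j)"
    by (simp only: power_mult_distrib pk) (simp only: mult_ac)
  also have "\<dots> = fps_X^j * (G' * phi^(Suc r))" using ipow by simp
  finally have e1: "(fps_X * ip)^j * G' * phi^(Suc k) = fps_X^j * (G' * phi^(Suc r))" .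
  have "G' * phi^(Suc r) = phi^r * (ip * phi) - fps_X * (fps_deriv phi * phi^r * (ip * phi) * ip)"
    unfolding G'eq by (simp add: algebra_simps power2_eq_square)
  also have "\<dots> = phi^r - fps_X * (fps_deriv phi * phi^r * ip)" using ipp by simp
  finally have e2: "G' * phi^(Suc r) = phi^r - fps_X * (fps_deriv phi * phi^r * ip)" .
  have coef: "(G' * phi^(Suc r)) $ r = (if r = 0 then 1 else 0)"
  proof (cases r)
    case 0
    then show ?thesis using e2 by simp
  next
    case (Suc q)
    have "fps_deriv phi * phi^r * ip = fps_deriv phi * phi^q * (ip * phi)"
      using Suc by (simp only: power_Suc mult_ac)
    then have a: "fps_deriv phi * phi^r * ip = fps_deriv phi * phi^q" using ipp by simp
    have "fps_deriv (phi^(Suc q)) = fps_const (of_nat (Suc q)) * fps_deriv phi * phi^q"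
      using fps_deriv_power[of phi "Suc q"] by simp
    then have "(fps_deriv (phi^(Suc q))) $ q = (fps_const (of_nat (Suc q)) * (fps_deriv phi * phi^q)) $ q"
      by (simp only: mult.assoc)
    then have "of_nat (Suc q) * (phi^(Suc q)) $ (Suc q) = of_nat (Suc q) * (fps_deriv phi * phi^q) $ q"
      by (simp only: fps_deriv_nth fps_mult_left_const_nth Suc_eq_plus1)
    then have "(phi^(Suc q)) $ (Suc q) = (fps_deriv phi * phi^q) $ q" by simp
    moreover have "G' * phi^(Suc r) = phi^r - fps_X * (fps_deriv phi * phi^q)"
      using e2 unfolding a .
    moreover have "(phi^r - fps_X * (fps_deriv phi * phi^q)) $ r
       = (phi^(Suc q)) $ (Suc q) - (fps_deriv phi * phi^q) $ q"
      using Suc by (simp only: fps_sub_nth fps_X_mult_nth) simp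
    ultimately show ?thesis using Suc by simp
  qed
  have "((fps_X * ip)^j * G' * phi^(Suc k)) $ k = (G' * phi^(Suc r)) $ r"
    unfolding e1 using jk unfolding r_def by (simp only: fps_X_power_mult_nth) simp
  then show ?thesis using coef jk unfolding r_def G'_def ip_def by auto
qed

lemma lagrange:
  fixes phi F :: "real fps"
  assumes p0: "phi $ 0 \<noteq> 0"
  shows "of_nat (Suc k) * (F oo fps_inv (fps_X * inverse phi)) $ (Suc k)
         = (fps_deriv F * phi^(Suc k)) $ k"
proof -
  define G where "G = fps_X * inverse phi"
  have G0: "G$0 = 0" by (simp add: G_def)
  have G1: "G$1 \<noteq> 0" using p0 by (simp add: G_def fps_X_mult_nth)
  define E where "E = fps_inv G"
  have E0: "E$0 = 0" by (simp add: E_def fps_inv_def)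
  have EG: "E oo G = fps_X" using fps_inv[OF G0 G1] by (simp add: E_def)
  define A where "A = F oo E"
  have AG: "A oo G = F"
    using fps_compose_assoc[OF G0 E0, of F] EG by (simp add: A_def)
  define P where "P = (\<Sum>j\<in>{0..Suc k}. fps_const (A$j) * G^j)"
  have Gpow: "(G^j)$i = 0" if "i < j" for i j
    using that by (simp add: G_def power_mult_distrib fps_X_power_mult_nth)
  have FP: "F$i = P$i" if i: "i \<le> Suc k" for i
  proof -
    have "F$i = (\<Sum>j=0..i. A$j * (G^j)$i)" 
      using fps_compose_nth[of A G i] AG by simp
    also have "\<dots> = (\<Sum>j=0..Suc k. A$j * (G^j)$i)"
      by (rule sum.mono_neutral_left) (use i Gpow in auto)
    also have "\<dots> = P$i" by (simp add: P_def fps_sum_nth)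
    finally show ?thesis .
  qed
  have dFP: "(fps_deriv F * phi^(Suc k)) $ k = (fps_deriv P * phi^(Suc k)) $ k"
    unfolding fps_mult_nth
    by (rule sum.cong) (auto simp: FP)
  have dP: "fps_deriv P * phi^(Suc k) = (\<Sum>j\<in>{0..Suc k}. fps_const (A$j * of_nat j) *
             (G^(j-1) * fps_deriv G * phi^(Suc k)))"
  proof -
    have "fps_deriv P = (\<Sum>j\<in>{0..Suc k}. fps_const (A$j) * (fps_const (of_nat j) * fps_deriv G * G^(j-1)))"
      unfolding P_def fps_deriv_sum
      by (rule sum.cong) (simp_all only: fps_deriv_mult_const_left fps_deriv_power)
    then have "fps_deriv P * phi^(Suc k) = (\<Sum>j\<in>{0..Suc k}. fps_const (A$j) * (fps_const (of_nat j) * fps_deriv G * G^(j-1)) * phi^(Suc k))"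
      by (simp only: sum_distrib_right)
    also have "\<dots> = (\<Sum>j\<in>{0..Suc k}. fps_const (A$j * of_nat j) *
             (G^(j-1) * fps_deriv G * phi^(Suc k)))"
      by (rule sum.cong) (simp_all only: mult_ac fps_const_mult[symmetric])
    finally show ?thesis .
  qed
  have "(fps_deriv P * phi^(Suc k)) $ k =
      (\<Sum>j\<in>{0..Suc k}. A$j * of_nat j * (G^(j-1) * fps_deriv G * phi^(Suc k)) $ k)"
    unfolding dP fps_sum_nth by simp
  also have "\<dots> = (\<Sum>i\<in>{0..k}. A$(Suc i) * of_nat (Suc i) * (G^i * fps_deriv G * phi^(Suc k)) $ k)"
    by (subst sum.atLeast0_atMost_Suc_shift) simp
  also have "\<dots> = (\<Sum>i\<in>{0..k}. if i = k then A$(Suc k) * of_nat (Suc k) else 0)"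
    by (rule sum.cong) (use lag_coef[OF p0] in \<open>auto simp: G_def\<close>)
  also have "\<dots> = A$(Suc k) * of_nat (Suc k)" by simp
  finally show ?thesis using dFP by (simp add: A_def E_def G_def)
qed




definition VV :: "real fps" where "VV = inverse (1 - fps_X)"

lemma VV_nth: "VV $ i = 1"
  unfolding VV_def fps_inverse_one_minus_fps_X by simp

lemma VV_mult_nth: "(VV * f) $ i = (\<Sum>l=0..i. f $ l)"
proof -
  have "(VV * f) $ i = (\<Sum>l=0..i. f $ (i - l))" by (simp add: fps_mult_nth VV_nth)
  also have "\<dots> = (\<Sum>l=0..i. f $ l)"
    using sum.atLeastAtMost_rev[of "\<lambda>l. f $ l" 0 i] by simp
  finally show ?thesis .
qed

lemma VV_pow_nth: "(VV ^ r) $ i = ((real r + real i - 1) gchoose i)"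
proof (induction r arbitrary: i)
  case 0
  then show ?case by (cases i) (auto simp flip: binomial_gbinomial)
next
  case (Suc r)
  have "(VV ^ Suc r) $ i = (\<Sum>l=0..i. (VV^r) $ l)" by (simp add: VV_mult_nth)
  also have "\<dots> = (\<Sum>l\<le>i. ((real r - 1) + real l) gchoose l)"
    using Suc by (simp add: atLeast0AtMost algebra_simps)
  also have "\<dots> = (real r - 1 + real i + 1) gchoose i" by (rule gbinomial_parallel_sum)
  finally show ?case by (simp add: algebra_simps)
qed

lemma psi_pow_nth:
  fixes n :: nat
  shows "((VV - fps_X) ^ (2*n+1)) $ (n+1) =
    (\<Sum>k = 0..n + 1. (-1) ^ (n + k + 1) * real ((2 * n + 1) choose (n + k)) *
        ((real n + 2 * real k - 1) gchoose k))"
proof -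
  define N where "N = 2*n+1"
  define m where "m = n+1"
  have "(VV - fps_X) ^ N = (\<Sum>j\<le>N. of_nat (N choose j) * (-fps_X)^j * VV^(N-j))"
    using binomial_ring[of "-fps_X" VV N] by (simp add: algebra_simps)
  also have "\<dots> = (\<Sum>j\<le>N. fps_const (real (N choose j) * (-1)^j) * (fps_X^j * VV^(N-j)))"
  proof (rule sum.cong)
    fix j
    have mm: "(-1::real fps) = fps_const (-1)" by (simp add: fps_eq_iff)
    have m1: "(-1::real fps)^j = fps_const ((-1)^j)" by (simp only: mm fps_const_power)
    have "(of_nat (N choose j) :: real fps) * (-fps_X)^j * VV^(N-j)
        = fps_const (real (N choose j)) * (-1)^j * (fps_X^j * VV^(N-j))"
      by (simp only: power_minus[of "fps_X::real fps"] fps_of_nat mult_ac)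
    also have "\<dots> = fps_const (real (N choose j) * (-1)^j) * (fps_X^j * VV^(N-j))"
      by (simp only: m1 fps_const_mult[symmetric])
    finally show "(of_nat (N choose j) :: real fps) * (-fps_X)^j * VV^(N-j)
        = fps_const (real (N choose j) * (-1)^j) * (fps_X^j * VV^(N-j))" .
  qed simp
  finally have eqN: "(VV - fps_X) ^ N = (\<Sum>j\<le>N. fps_const (real (N choose j) * (-1)^j) * (fps_X^j * VV^(N-j)))" .
  have "((VV - fps_X) ^ N) $ m = (\<Sum>j\<le>N. real (N choose j) * (-1)^j * (if m < j then 0 else (VV^(N-j)) $ (m-j)))"
    unfolding eqN fps_sum_nth fps_mult_left_const_nth fps_X_power_mult_nth ..
  also have "\<dots> = (\<Sum>j=0..m. real (N choose j) * (-1)^j * (VV^(N-j)) $ (m-j))"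
    by (rule sum.mono_neutral_cong_right) (auto simp: N_def m_def)
  also have "\<dots> = (\<Sum>k=0..m. real (N choose (m-k)) * (-1)^(m-k) * (VV^(N-(m-k))) $ k)"
    using sum.atLeastAtMost_rev[of "\<lambda>j. real (N choose j) * (-1)^j * (VV^(N-j)) $ (m-j)" 0 m]
    by simp
  also have "\<dots> = (\<Sum>k = 0..n + 1. (-1) ^ (n + k + 1) * real ((2 * n + 1) choose (n + k)) *
        ((real n + 2 * real k - 1) gchoose k))"
  proof (rule sum.cong)
    fix k assume k: "k \<in> {0..n+1}"
    have c: "N choose (m-k) = (2*n+1) choose (n+k)"
      unfolding N_def m_def using k by (subst binomial_symmetric) auto
    have s: "(-1::real)^(m-k) = (-1)^(n+k+1)"
    proof -
      have "n+k+1 = (m-k) + 2*k" using k unfolding m_def by auto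
      then have "(-1::real)^(n+k+1) = (-1)^(m-k) * (-1)^(2*k)" by (simp only: power_add)
      then show ?thesis by (simp add: power_mult)
    qed
    have v: "(VV^(N-(m-k))) $ k = ((real n + 2 * real k - 1) gchoose k)"
      using k unfolding N_def m_def by (simp add: VV_pow_nth algebra_simps)
    show "real (N choose (m-k)) * (-1)^(m-k) * (VV^(N-(m-k))) $ k =
      (-1) ^ (n + k + 1) * real ((2 * n + 1) choose (n + k)) * ((real n + 2 * real k - 1) gchoose k)"
      using c s v by simp
  qed (simp add: m_def)
  finally show ?thesis by (simp add: N_def m_def)
qed


lemma bb_neg: "h < 0 \<Longrightarrow> bb n h = 0" by (cases n) auto

lemma e1_0: "e1 $ 0 = 0" unfolding e1_def using EE0 by simp

lemma ww_0: "ww k $ 0 = (if k = 1 then 1 else 0)"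
proof (induction k rule: ww.induct)
  case 1 then show ?case by simp
next
  case 2 then show ?case by simp
next
  case (3 k) then show ?case using e1_0 EE0 by simp
qed

lemma bb_ww: "h \<ge> -1 \<Longrightarrow> real (bb n h) = ww (nat (h+1)) $ n"
proof (induction n arbitrary: h)
  case 0
  then show ?case
  proof (cases "h = -1")
    case True then show ?thesis by simp
  next
    case False
    then have "nat (h+1) \<ge> 1" using 0 by auto
    then show ?thesis using ww_0[of "nat (h+1)"] by auto
  qed
next
  case (Suc n)
  show ?case
  proof (cases "h \<ge> 1")
    case False
    then have "h = -1 \<or> h = 0" using Suc.prems by auto
    then show ?thesis by auto
  next
    case True
    define k where "k = nat (h - 1)"
    have hk: "nat (h+1) = k+2" "nat (h-2+1) = k" "nat (h-1+1) = k+1" "nat (h+1+1) = k+3" "nat (h+2+1) = k+4"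
      using True unfolding k_def by auto
    have "ww (nat (h+1)) $ Suc n = (ww k + ww (k+1) + ww (k+3) + ww (k+4)) $ n"
      unfolding hk(1) ww_rec by (simp add: fps_X_mult_nth)
    also have "\<dots> = real (bb n (h-2)) + real (bb n (h-1)) + real (bb n (h+1)) + real (bb n (h+2))"
      using Suc.IH[of "h-2"] Suc.IH[of "h-1"] Suc.IH[of "h+1"] Suc.IH[of "h+2"] True hk by simp
    finally show ?thesis using True by simp
  qed
qed

definition FF :: "real fps" where "FF = 1 - inverse psi"

lemma PS_nz: "PS \<noteq> 0" using PS0 by (metis one_neq_zero fps_nonzero_nth)

lemma Xww3: "fps_X * ww 3 = FF oo EE"
proof -
  have FFE: "FF oo EE = 1 - inverse PS"
    unfolding FF_def using EE0 psi0 by (simp add: fps_compose_sub_distrib fps_inverse_compose PS_comp)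
  have w3: "ww 3 = e1 * e1 + EE" by (simp add: numeral_eq_Suc)
  have a: "II * (1 - EE) = 1" by (rule II_rel)
  have b: "fps_X * PS^2 = EE" by (rule X_rel)
  have c: "inverse PS * PS = 1" using PS0 by (simp add: inverse_mult_eq_1)
  have "(fps_X * (e1 * e1 + EE)) * PS^2 = PS^2 - PS"
    using a b unfolding e1_def PS_def by algebra
  also have "\<dots> = (1 - inverse PS) * PS^2"
    using c by (simp add: algebra_simps power2_eq_square)
  finally have "fps_X * (e1 * e1 + EE) = 1 - inverse PS"
    using PS2_nz by simp
  then show ?thesis using FFE w3 by simp
qed

lemma FF_coeff: "(FF oo EE) $ Suc n = (psi ^ (2*n+1)) $ (n+1) / real (2*n+1)"
proof -
  have L: "of_nat (Suc n) * (FF oo EE) $ Suc n = (fps_deriv FF * (psi^2)^(Suc n)) $ n"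
    unfolding EE_def GG_def by (rule lagrange) (simp add: psi20)
  have ip: "inverse psi * psi = 1" using psi0 by (simp add: inverse_mult_eq_1)
  have dFF: "fps_deriv FF = fps_deriv psi * (inverse psi)^2"
    unfolding FF_def using psi0 by (simp add: fps_inverse_deriv)
  have p1: "(psi^2)^(Suc n) = psi^(2*n) * psi^2"
    by (metis power_mult power_Suc2 mult.commute)
  have "fps_deriv FF * (psi^2)^(Suc n) = fps_deriv psi * psi^(2*n) * ((inverse psi)^2 * psi^2)"
    unfolding dFF p1 by (simp only: mult_ac)
  also have "\<dots> = fps_deriv psi * psi^(2*n) * (inverse psi * psi)^2"
    by (simp only: power_mult_distrib)
  also have "\<dots> = fps_deriv psi * psi^(2*n)" using ip by simp
  finally have e: "fps_deriv FF * (psi^2)^(Suc n) = fps_deriv psi * psi^(2*n)" .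
  have d: "fps_deriv (psi^(2*n+1)) = fps_const (of_nat (2*n+1)) * (fps_deriv psi * psi^(2*n))"
    using fps_deriv_power[of psi "2*n+1"] by (simp add: mult.assoc)
  have "of_nat (Suc n) * (psi^(2*n+1)) $ (n+1) = real (2*n+1) * (fps_deriv psi * psi^(2*n)) $ n"
  proof -
    have "(fps_deriv (psi^(2*n+1))) $ n = of_nat (n+1) * (psi^(2*n+1)) $ (n+1)"
      by (rule fps_deriv_nth)
    moreover have "(fps_deriv (psi^(2*n+1))) $ n = of_nat (2*n+1) * (fps_deriv psi * psi^(2*n)) $ n"
      unfolding d by (rule fps_mult_left_const_nth)
    ultimately show ?thesis by simp
  qed
  then have "of_nat (Suc n) * (FF oo EE) $ Suc n * real (2*n+1) = of_nat (Suc n) * (psi^(2*n+1)) $ (n+1)"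
    using L e by simp
  then have "(FF oo EE) $ Suc n * real (2*n+1) = (psi^(2*n+1)) $ (n+1)"
    by (simp only: mult.assoc mult_cancel_left of_nat_eq_0_iff) simp
  moreover have "real (2*n+1) \<noteq> 0" by simp
  ultimately show ?thesis by (simp add: eq_divide_eq)
qed

theorem proposition3p6:
  fixes n :: nat
  shows "real (card (basketball_excursion_walks n)) =
    (1 / real (2 * n + 1)) *
    (\<Sum>k = 0..n + 1. (-1) ^ (n + k + 1) * real ((2 * n + 1) choose (n + k)) *
        ((real n + 2 * real k - 1) gchoose k))"
proof -
  have "real (card (basketball_excursion_walks n)) = real (bb n 2)" by (simp add: card_walks)
  also have "\<dots> = ww 3 $ n" using bb_ww[of 2 n] by simp
  also have "\<dots> = (fps_X * ww 3) $ Suc n" by (simp add: fps_X_mult_nth)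
  also have "\<dots> = (FF oo EE) $ Suc n" by (simp add: Xww3)
  also have "\<dots> = (psi ^ (2*n+1)) $ (n+1) / real (2*n+1)" by (rule FF_coeff)
  also have "psi = VV - fps_X" by (simp add: psi_def VV_def)
  finally show ?thesis using psi_pow_nth[of n] by simp
qed

end
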